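(* Let $\mathcal G$ be a synchronous game. There is $C>0$ depending only on $\mathcal G$ such that for every $0<\epsilon\le1$: if $\mathcal S=(\{E^i_a\},\{F^i_a\},|\psi\rangle)$ is an $\epsilon$-perfect quantum strategy for $\mathcal G$ and $\rho=\lambda^2$ is the reduced density matrix of $|\psi\rangle$ on Bob's factor, then $p^i_a\mapsto F^i_a$ is a $C\epsilon^{1/4}$-representation of the synchronous algebra $\mathcal A(\mathcal G)$ with respect to $\|\cdot\|_\rho$. If moreover $\mathcal S$ is a synchronous strategy, then $\|F^i_a\lambda-\lambda F^i_a\|_F\le C\epsilon^{1/2}$ for all $(i,a)$.
   Context: A game $\mathcal{G}=(\eta,I,J,A,B,V)$ has finite input sets, output sets, a distribution $\eta$ on $I\times J$ and predicate $V$. A synchronous game has $I=J$, $A=B$, $V(a,b|i,i)=0$ for $a\ne b$, and $\eta(i,j)>0$ for all $i,j$. A quantum strategy consists of a finite-dimensional Hilbert space $H$, PVMs $\{E^i_a\}_a$ (Alice) and $\{F^i_a\}_a$ (Bob) on $H$ and a unit vector $|\psi\rangle\in H\otimes H$, written $|\psi\rangle=\sum_t|t\rangle\otimes\lambda|t\rangle$ for an orthonormal basis $\{|t\rangle\}$ and positive semidefinite $\lambda$ with $\mathrm{tr}(\lambda^2)=1$ (so $\rho=\lambda^2$); $\overline X$ is entrywise conjugation in this basis. It is $\epsilon$-perfect if $\sum_{i,j}\eta(i,j)\sum_{a,b}V(a,b|i,j)\langle\psi|E^i_a\otimes F^j_b|\psi\rangle\ge1-\epsilon$, and synchronous if $E^i_a=\overline{F^i_a}$.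 Norms: $\|A\|_F=\mathrm{tr}(A^*A)^{1/2}$, $\|T\|_\rho=\|T\rho^{1/2}\|_F$. The synchronous algebra $\mathcal A(\mathcal G)$ is the finitely presented $*$-algebra with generators $p^i_a$ and relations $(p^i_a)^2=p^i_a=(p^i_a)^*$, $\sum_ap^i_a=1$ for each $i$, $p^i_ap^j_b=0$ whenever $V(a,b|i,j)=0$. An $\epsilon$-representation with respect to a seminorm $\|\cdot\|$ is an assignment of operators to generators (extended to a unital $*$-homomorphism of the free $*$-algebra) under which every defining relation $r$ (a relation $a=b$ meaning $r=a-b$) satisfies $\|\phi(r)\|\le\epsilon$. *)

theory Defs
  imports Complex_Main "Jordan_Normal_Form.Schur_Decomposition"
begin

text \<open>A game with question set 'i (both players) and answer set 'a (both players);
  eta is the question distribution, V a b i j is the predicate V(a,b|i,j)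
  (True = 1, False = 0).\<close>

definition synchronous_game ::
  "('i::finite \<Rightarrow> 'i \<Rightarrow> real) \<Rightarrow> ('a::finite \<Rightarrow> 'a \<Rightarrow> 'i \<Rightarrow> 'i \<Rightarrow> bool) \<Rightarrow> bool" where
  "synchronous_game eta V \<longleftrightarrow>
     (\<forall>i j. eta i j > 0) \<and> (\<Sum>i\<in>UNIV. \<Sum>j\<in>UNIV. eta i j) = 1 \<and>
     (\<forall>i a b. a \<noteq> b \<longrightarrow> \<not> V a b i i)"

definition hermitian_mat :: "nat \<Rightarrow> complex mat \<Rightarrow> bool" where
  "hermitian_mat d A \<longleftrightarrow> A \<in> carrier_mat d d \<and> mat_adjoint A = A"

definition qform :: "complex mat \<Rightarrow> complex vec \<Rightarrow> complex" where
  "qform A v = (\<Sum>k<dim_vec v. cnj (v $ k) * ((A *\<^sub>v v) $ k))"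

definition psd_mat :: "nat \<Rightarrow> complex mat \<Rightarrow> bool" where
  "psd_mat d A \<longleftrightarrow> hermitian_mat d A \<and>
     (\<forall>v\<in>carrier_vec d. Re (qform A v) \<ge> 0)"

text \<open>Kronecker product on C^d \<otimes> C^d, basis e_s \<otimes> e_u indexed by s*d+u.\<close>
definition kron :: "nat \<Rightarrow> complex mat \<Rightarrow> complex mat \<Rightarrow> complex mat" where
  "kron d A B = mat (d*d) (d*d)
     (\<lambda>(p,q). A $$ (p div d, q div d) * B $$ (p mod d, q mod d))"

text \<open>The state psi = \<Sum>_t |t\<rangle> \<otimes> lambda |t\<rangle>.\<close>
definition state_vec :: "nat \<Rightarrow> complex mat \<Rightarrow> complex vec" where
  "state_vec d lam = vec (d*d) (\<lambda>p. lam $$ (p mod d, p div d))"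

definition mtrace :: "complex mat \<Rightarrow> complex" where
  "mtrace A = (\<Sum>k<dim_row A. A $$ (k,k))"

definition frob_norm :: "complex mat \<Rightarrow> real" where
  "frob_norm A = sqrt (Re (mtrace (mat_adjoint A * A)))"

text \<open>||T||_rho = ||T rho^(1/2)||_F with rho = lam^2, so rho^(1/2) = lam (lam psd).\<close>
definition rho_norm :: "complex mat \<Rightarrow> complex mat \<Rightarrow> real" where
  "rho_norm lam T = frob_norm (T * lam)"

definition entry_conj :: "complex mat \<Rightarrow> complex mat" where
  "entry_conj A = map_mat cnj A"

definition msum :: "nat \<Rightarrow> ('a::finite \<Rightarrow> complex mat) \<Rightarrow> complex mat" where
  "msum d P = mat d d (\<lambda>(p,q). \<Sum>a\<in>UNIV. P a $$ (p,q))"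

definition PVM :: "nat \<Rightarrow> ('a::finite \<Rightarrow> complex mat) \<Rightarrow> bool" where
  "PVM d P \<longleftrightarrow> (\<forall>a. hermitian_mat d (P a) \<and> P a * P a = P a) \<and>
     msum d P = 1\<^sub>m d"

definition quantum_strategy ::
  "nat \<Rightarrow> ('i::finite \<Rightarrow> 'a::finite \<Rightarrow> complex mat) \<Rightarrow> ('i \<Rightarrow> 'a \<Rightarrow> complex mat)
     \<Rightarrow> complex mat \<Rightarrow> bool" where
  "quantum_strategy d E F lam \<longleftrightarrow> 0 < d \<and>
     (\<forall>i. PVM d (E i)) \<and> (\<forall>i. PVM d (F i)) \<and>
     psd_mat d lam \<and> mtrace (lam * lam) = 1"

definition win_prob ::
  "('i::finite \<Rightarrow> 'i \<Rightarrow> real) \<Rightarrow> ('a::finite \<Rightarrow> 'a \<Rightarrow> 'i \<Rightarrow> 'i \<Rightarrow> bool) \<Rightarrow> nat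
   \<Rightarrow> ('i \<Rightarrow> 'a \<Rightarrow> complex mat) \<Rightarrow> ('i \<Rightarrow> 'a \<Rightarrow> complex mat) \<Rightarrow> complex mat \<Rightarrow> real" where
  "win_prob eta V d E F lam =
     (\<Sum>i\<in>UNIV. \<Sum>j\<in>UNIV. eta i j * (\<Sum>a\<in>UNIV. \<Sum>b\<in>UNIV.
        (if V a b i j then Re (qform (kron d (E i a) (F j b)) (state_vec d lam)) else 0)))"

definition eps_perfect ::
  "('i::finite \<Rightarrow> 'i \<Rightarrow> real) \<Rightarrow> ('a::finite \<Rightarrow> 'a \<Rightarrow> 'i \<Rightarrow> 'i \<Rightarrow> bool) \<Rightarrow> nat
   \<Rightarrow> ('i \<Rightarrow> 'a \<Rightarrow> complex mat) \<Rightarrow> ('i \<Rightarrow> 'a \<Rightarrow> complex mat) \<Rightarrow> complex mat \<Rightarrow> real \<Rightarrow> bool" where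
  "eps_perfect eta V d E F lam eps \<longleftrightarrow> win_prob eta V d E F lam \<ge> 1 - eps"

definition synchronous_strategy ::
  "('i \<Rightarrow> 'a \<Rightarrow> complex mat) \<Rightarrow> ('i \<Rightarrow> 'a \<Rightarrow> complex mat) \<Rightarrow> bool" where
  "synchronous_strategy E F \<longleftrightarrow> (\<forall>i a. E i a = entry_conj (F i a))"

datatype ('i, 'a) fexpr =
    Gen 'i 'a | Zero | Unit | Add "('i,'a) fexpr" "('i,'a) fexpr" | Neg "('i,'a) fexpr"
  | Mul "('i,'a) fexpr" "('i,'a) fexpr" | Star "('i,'a) fexpr" | Scal complex "('i,'a) fexpr"

fun feval :: "nat \<Rightarrow> ('i \<Rightarrow> 'a \<Rightarrow> complex mat) \<Rightarrow> ('i,'a) fexpr \<Rightarrow> complex mat" where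
  "feval d F (Gen i a) = F i a"
| "feval d F Zero = 0\<^sub>m d d"
| "feval d F Unit = 1\<^sub>m d"
| "feval d F (Add x y) = feval d F x + feval d F y"
| "feval d F (Neg x) = - feval d F x"
| "feval d F (Mul x y) = feval d F x * feval d F y"
| "feval d F (Star x) = mat_adjoint (feval d F x)"
| "feval d F (Scal c x) = c \<cdot>\<^sub>m feval d F x"

definition fsum :: "('i,'a) fexpr list \<Rightarrow> ('i,'a) fexpr" where
  "fsum xs = foldr Add xs Zero"

text \<open>Defining relations r (relation x = y written as r = x - y).\<close>
definition sync_relations ::
  "('a::finite \<Rightarrow> 'a \<Rightarrow> 'i::finite \<Rightarrow> 'i \<Rightarrow> bool) \<Rightarrow> ('i,'a) fexpr set" where
  "sync_relations V =
     {Add (Mul (Gen i a) (Gen i a)) (Neg (Gen i a)) | i a. True}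
   \<union> {Add (Gen i a) (Neg (Star (Gen i a))) | i a. True}
   \<union> {Add (fsum (map (Gen i) xs)) (Neg Unit) | i xs. distinct xs \<and> set xs = UNIV}
   \<union> {Mul (Gen i a) (Gen j b) | i j a b. \<not> V a b i j}"

definition eps_representation ::
  "('i,'a) fexpr set \<Rightarrow> (complex mat \<Rightarrow> real) \<Rightarrow> nat \<Rightarrow> ('i \<Rightarrow> 'a \<Rightarrow> complex mat) \<Rightarrow> real \<Rightarrow> bool" where
  "eps_representation R nrm d F eps \<longleftrightarrow> (\<forall>r\<in>R. nrm (feval d F r) \<le> eps)"

end

theory Submission
  imports Defs
begin

lemma adj_eq: "mat_adjoint (A::complex mat) = mat (dim_col A) (dim_row A) (\<lambda>(i,j). cnj (A$$(j,i)))"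
  unfolding mat_adjoint_def
  by (rule eq_matI) (auto simp: mat_of_rows_index)

lemma adj_carrier[simp]: "(A::complex mat) \<in> carrier_mat n m \<Longrightarrow> mat_adjoint A \<in> carrier_mat m n"
  by (simp add: adj_eq)

lemma adj_dims[simp]: "dim_row (mat_adjoint (A::complex mat)) = dim_col A"
   "dim_col (mat_adjoint (A::complex mat)) = dim_row A"
  by (simp_all add: adj_eq)

lemma adj_index[simp]: "i < dim_col A \<Longrightarrow> j < dim_row A \<Longrightarrow> mat_adjoint (A::complex mat) $$ (i,j) = cnj (A $$ (j,i))"
  by (simp add: adj_eq)

lemma adj_adj[simp]: "mat_adjoint (mat_adjoint (A::complex mat)) = A"
  by (rule eq_matI) auto

lemma adj_mult: assumes "(A::complex mat) \<in> carrier_mat n m" "B \<in> carrier_mat m p"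
  shows "mat_adjoint (A*B) = mat_adjoint B * mat_adjoint A"
  using assms by (intro eq_matI) (auto simp: scalar_prod_def mult.commute intro!: sum.cong)

lemma adj_minus: assumes "(A::complex mat) \<in> carrier_mat n m" "B \<in> carrier_mat n m"
  shows "mat_adjoint (A - B) = mat_adjoint A - mat_adjoint B"
  using assms by (intro eq_matI) auto

lemma mult_index: assumes "(A::complex mat) \<in> carrier_mat n m" "B \<in> carrier_mat m p" "i < n" "j < p"
  shows "(A * B) $$ (i,j) = (\<Sum>k<m. A$$(i,k) * B$$(k,j))"
  using assms by (auto simp: scalar_prod_def atLeast0LessThan intro!: sum.cong)

lemma mtrace_mult: assumes "(A::complex mat) \<in> carrier_mat n m" "B \<in> carrier_mat m n"
  shows "mtrace (A*B) = (\<Sum>i<n. \<Sum>k<m. A$$(i,k) * B$$(k,i))"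
  using assms unfolding mtrace_def by (auto simp: scalar_prod_def atLeast0LessThan intro!: sum.cong)

lemma mtrace_comm: assumes "(A::complex mat) \<in> carrier_mat n m" "B \<in> carrier_mat m n"
  shows "mtrace (A*B) = mtrace (B*A)"
  unfolding mtrace_mult[OF assms] mtrace_mult[OF assms(2,1)]
  by (subst sum.swap) (simp add: mult.commute)

lemma mtrace_minus: assumes "(A::complex mat) \<in> carrier_mat n n" "B \<in> carrier_mat n n"
  shows "mtrace (A - B) = mtrace A - mtrace B"
  using assms unfolding mtrace_def by (simp add: sum_subtractf)

lemma mtrace_adj_self: assumes "(A::complex mat) \<in> carrier_mat n m"
  shows "Re (mtrace (mat_adjoint A * A)) = (\<Sum>i<m. \<Sum>k<n. (cmod (A$$(k,i)))^2)"
  using assms by (simp add: mtrace_mult[of _ m n] complex_mult_cnj cmod_power2 mult.commute)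

lemma frob_sq: assumes "(A::complex mat) \<in> carrier_mat n m"
  shows "(frob_norm A)^2 = (\<Sum>i<m. \<Sum>k<n. (cmod (A$$(k,i)))^2)"
  unfolding frob_norm_def mtrace_adj_self[OF assms]
  by (simp add: sum_nonneg)

lemma frob_nonneg: "frob_norm A \<ge> 0"
proof -
  have "A \<in> carrier_mat (dim_row A) (dim_col A)" by auto
  from mtrace_adj_self[OF this] show ?thesis unfolding frob_norm_def
    by (simp add: sum_nonneg)
qed

lemma frob_eq: assumes "(A::complex mat) \<in> carrier_mat n m"
  shows "frob_norm A = sqrt (\<Sum>i<m. \<Sum>k<n. (cmod (A$$(k,i)))^2)"
  using frob_sq[OF assms] frob_nonneg by (metis real_sqrt_unique)

lemma frob_adj: assumes "(A::complex mat) \<in> carrier_mat n m"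
  shows "frob_norm (mat_adjoint A) = frob_norm A"
proof -
  have "(\<Sum>i<n. \<Sum>k<m. (cmod (mat_adjoint A$$(k,i)))^2) = (\<Sum>i<m. \<Sum>k<n. (cmod (A$$(k,i)))^2)"
    using assms by (subst sum.swap) (auto intro!: sum.cong)
  then show ?thesis using frob_eq[OF assms] frob_eq[OF adj_carrier[OF assms]] by simp
qed

lemma cs_real: assumes "finite S" "\<And>i. f i \<ge> (0::real)" "\<And>i. g i \<ge> 0"
  shows "(\<Sum>i\<in>S. f i * g i) \<le> sqrt (\<Sum>i\<in>S. (f i)^2) * sqrt (\<Sum>i\<in>S. (g i)^2)"
proof -
  define X where "X = sqrt (\<Sum>i\<in>S. (f i)^2)"
  define Y where "Y = sqrt (\<Sum>i\<in>S. (g i)^2)"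
  have X0: "X \<ge> 0" "Y \<ge> 0" unfolding X_def Y_def by (simp_all add: sum_nonneg)
  have X2: "X^2 = (\<Sum>i\<in>S. (f i)^2)" "Y^2 = (\<Sum>i\<in>S. (g i)^2)"
    unfolding X_def Y_def by (simp_all add: sum_nonneg)
  show ?thesis
  proof (cases "X = 0 \<or> Y = 0")
    case True
    then have "(\<forall>i\<in>S. f i = 0) \<or> (\<forall>i\<in>S. g i = 0)"
      using X2 assms by (auto simp: sum_nonneg_eq_0_iff)
    then show ?thesis unfolding X_def[symmetric] Y_def[symmetric] using X0 by auto
  next
    case False
    then have pos: "X > 0" "Y > 0" using X0 by auto
    have "\<And>i. 2 * X * Y * (f i * g i) \<le> (f i)^2 * Y^2 + (g i)^2 * X^2"
    proof -
      fix i have "0 \<le> (f i * Y - g i * X)^2" by simp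
      then show "2 * X * Y * (f i * g i) \<le> (f i)^2 * Y^2 + (g i)^2 * X^2"
        by (simp add: power2_eq_square algebra_simps)
    qed
    then have "(\<Sum>i\<in>S. 2 * X * Y * (f i * g i)) \<le> (\<Sum>i\<in>S. (f i)^2 * Y^2 + (g i)^2 * X^2)"
      by (rule sum_mono)
    moreover have "(\<Sum>i\<in>S. 2 * X * Y * (f i * g i)) = 2 * X * Y * (\<Sum>i\<in>S. f i * g i)"
      by (simp add: sum_distrib_left)
    moreover have "(\<Sum>i\<in>S. (f i)^2 * Y^2 + (g i)^2 * X^2) = (\<Sum>i\<in>S. (f i)^2) * Y^2 + (\<Sum>i\<in>S. (g i)^2) * X^2"
      by (simp add: sum.distrib sum_distrib_right)
    ultimately have "2 * X * Y * (\<Sum>i\<in>S. f i * g i) \<le> X^2 * Y^2 + Y^2 * X^2"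
      by (simp add: X2)
    then have "(2 * X * Y) * (\<Sum>i\<in>S. f i * g i) \<le> (2 * X * Y) * (X * Y)"
      by (simp add: power2_eq_square algebra_simps)
    then have "(\<Sum>i\<in>S. f i * g i) \<le> X * Y"
      using pos by (simp add: mult_le_cancel_left)
    then show ?thesis unfolding X_def Y_def .
  qed
qed

lemma frob_cs: assumes "(A::complex mat) \<in> carrier_mat n m" "B \<in> carrier_mat m n"
  shows "cmod (mtrace (A*B)) \<le> frob_norm A * frob_norm B"
proof -
  let ?S = "{..<n} \<times> {..<m}"
  let ?f = "\<lambda>(i,k). cmod (A$$(i,k))" and ?g = "\<lambda>(i,k). cmod (B$$(k,i))"
  have "cmod (mtrace (A*B)) \<le> (\<Sum>i<n. \<Sum>k<m. cmod (A$$(i,k)) * cmod (B$$(k,i)))"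
    unfolding mtrace_mult[OF assms]
    by (rule order_trans[OF norm_sum sum_mono], rule order_trans[OF norm_sum sum_mono])
       (simp add: norm_mult)
  also have "\<dots> = (\<Sum>p\<in>?S. ?f p * ?g p)"
    by (simp add: sum.cartesian_product case_prod_beta)
  also have "\<dots> \<le> sqrt (\<Sum>p\<in>?S. (?f p)^2) * sqrt (\<Sum>p\<in>?S. (?g p)^2)"
    by (rule cs_real) auto
  also have "sqrt (\<Sum>p\<in>?S. (?f p)^2) = frob_norm A"
    unfolding frob_eq[OF assms(1)]
    by (subst sum.swap) (simp add: sum.cartesian_product case_prod_beta)
  also have "sqrt (\<Sum>p\<in>?S. (?g p)^2) = frob_norm B"
    unfolding frob_eq[OF assms(2)]
    by (simp add: sum.cartesian_product case_prod_beta)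
  finally show ?thesis .
qed

lemma frob_sq_tr: assumes "(A::complex mat) \<in> carrier_mat n m"
  shows "(frob_norm A)^2 = Re (mtrace (mat_adjoint A * A))"
  using frob_sq[OF assms] mtrace_adj_self[OF assms] by simp

lemma frob_diff: assumes "(A::complex mat) \<in> carrier_mat n m" "B \<in> carrier_mat n m"
  shows "(frob_norm (A - B))^2 = (frob_norm A)^2 + (frob_norm B)^2 - 2 * Re (mtrace (mat_adjoint A * B))"
proof -
  have e: "\<And>a b::complex. (cmod (a - b))^2 = (cmod a)^2 + (cmod b)^2 - 2 * Re (cnj a * b)"
    by (simp only: cmod_power2) (simp add: power2_eq_square algebra_simps)
  have tr: "mtrace (mat_adjoint A * B) = (\<Sum>i<m. \<Sum>k<n. cnj (A$$(k,i)) * B$$(k,i))"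
    using assms by (simp add: mtrace_mult[of _ m n])
  have c: "A - B \<in> carrier_mat n m" using assms by auto
  have "(frob_norm (A-B))^2 = (\<Sum>i<m. \<Sum>k<n. (cmod (A$$(k,i)))^2 + (cmod (B$$(k,i)))^2 - 2*Re(cnj (A$$(k,i)) * B$$(k,i)))"
    unfolding frob_sq[OF c] using assms by (intro sum.cong refl) (simp add: e)
  also have "\<dots> = (\<Sum>i<m. \<Sum>k<n. (cmod (A$$(k,i)))^2) + (\<Sum>i<m. \<Sum>k<n. (cmod (B$$(k,i)))^2)
     - 2 * Re (\<Sum>i<m. \<Sum>k<n. cnj (A$$(k,i)) * B$$(k,i))"
    by (simp only: sum_subtractf sum.distrib sum_distrib_left Re_sum)
  finally show ?thesis using tr by (simp only: frob_sq[OF assms(1)] frob_sq[OF assms(2)])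
qed

lemma frob_minus_comm: assumes "(A::complex mat) \<in> carrier_mat n m" "B \<in> carrier_mat n m"
  shows "frob_norm (A - B) = frob_norm (B - A)"
proof -
  have c: "A - B \<in> carrier_mat n m" "B - A \<in> carrier_mat n m" using assms by auto
  show ?thesis unfolding frob_eq[OF c(1)] frob_eq[OF c(2)]
    using assms by (auto intro!: arg_cong[where f=sqrt] sum.cong simp: norm_minus_commute)
qed

definition projm :: "nat \<Rightarrow> complex mat \<Rightarrow> bool" where
  "projm d P \<longleftrightarrow> P \<in> carrier_mat d d \<and> mat_adjoint P = P \<and> P * P = P"

lemma projm_idem2: assumes "projm d P" "X \<in> carrier_mat d m"
  shows "P * (P * X) = P * X"
proof -
  have PC: "P \<in> carrier_mat d d" and PP: "P * P = P" using assms unfolding projm_def by auto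
  have "P * (P * X) = (P * P) * X" using PC assms(2) by simp
  then show ?thesis using PP by simp
qed

lemma frob_proj_left: assumes "projm d P" "X \<in> carrier_mat d m"
  shows "frob_norm (P * X) \<le> frob_norm X"
proof -
  have PC: "P \<in> carrier_mat d d" and PH: "mat_adjoint P = P" using assms unfolding projm_def by auto
  have PX: "P * X \<in> carrier_mat d m" using PC assms by simp
  have "mat_adjoint (P * X) * (P * X) = (mat_adjoint X * P) * (P * X)"
    using adj_mult[OF PC assms(2)] PH by simp
  also have "\<dots> = mat_adjoint X * (P * X)"
    using PC assms(2) projm_idem2[OF assms] by (subst assoc_mult_mat[of _ m d _ d _ m]) auto
  finally have h: "mat_adjoint (P * X) * (P * X) = mat_adjoint X * (P * X)" .
  have "(frob_norm (X - P * X))^2 = (frob_norm X)^2 + (frob_norm (P*X))^2 - 2 * Re (mtrace (mat_adjoint X * (P*X)))"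
    by (rule frob_diff[OF assms(2) PX])
  also have "Re (mtrace (mat_adjoint X * (P*X))) = (frob_norm (P*X))^2"
    using frob_sq_tr[OF PX] h by simp
  finally have "(frob_norm (P*X))^2 \<le> (frob_norm X)^2"
    by (smt (verit) zero_le_power2)
  then show ?thesis using frob_nonneg by (meson power2_le_imp_le)
qed

lemma frob_proj_right: assumes "projm d P" "X \<in> carrier_mat m d"
  shows "frob_norm (X * P) \<le> frob_norm X"
proof -
  have PC: "P \<in> carrier_mat d d" and PH: "mat_adjoint P = P" using assms unfolding projm_def by auto
  have "frob_norm (X * P) = frob_norm (mat_adjoint (X * P))"
    using frob_adj[of "X*P" m d] PC assms by simp
  also have "mat_adjoint (X * P) = P * mat_adjoint X" using adj_mult[OF assms(2) PC] PH by simp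
  also have "frob_norm (P * mat_adjoint X) \<le> frob_norm (mat_adjoint X)"
    by (rule frob_proj_left[OF assms(1), of "mat_adjoint X" m]) (use assms in simp)
  also have "\<dots> = frob_norm X" using frob_adj assms by simp
  finally show ?thesis .
qed

lemma projmD: assumes "projm d P" shows "P \<in> carrier_mat d d" "mat_adjoint P = P" "P * P = P"
  using assms unfolding projm_def by auto

lemma herm_entry: assumes "P \<in> carrier_mat d d" "mat_adjoint P = P" "i < d" "j < d"
  shows "P $$ (i,j) = cnj (P $$ (j,i))"
proof -
  have "mat_adjoint P $$ (i,j) = cnj (P $$ (j,i))" by (rule adj_index) (use assms in auto)
  then show ?thesis unfolding assms(2) .
qed

lemma entry_conj_carrier[simp]: "P \<in> carrier_mat n m \<Longrightarrow> entry_conj P \<in> carrier_mat n m"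
  unfolding entry_conj_def by simp

lemma entry_conj_index[simp]: "i < dim_row P \<Longrightarrow> j < dim_col P \<Longrightarrow> entry_conj P $$ (i,j) = cnj (P $$ (i,j))"
  unfolding entry_conj_def by simp

lemma entry_conj_dims[simp]: "dim_row (entry_conj P) = dim_row P" "dim_col (entry_conj P) = dim_col P"
  unfolding entry_conj_def by simp_all

lemma entry_conj_conj[simp]: "entry_conj (entry_conj P) = P"
  by (rule eq_matI) auto

lemma entry_conj_mult: assumes "A \<in> carrier_mat n m" "B \<in> carrier_mat m p"
  shows "entry_conj (A * B) = entry_conj A * entry_conj B"
  using assms by (intro eq_matI) (auto simp: scalar_prod_def)

lemma projm_entry_conj: assumes "projm d P" shows "projm d (entry_conj P)"
proof -
  note PC = projmD(1)[OF assms] and PH = projmD(2)[OF assms] and PP = projmD(3)[OF assms]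
  have "mat_adjoint (entry_conj P) = entry_conj P"
  proof (rule eq_matI)
    fix i j assume "i < dim_row (entry_conj P)" "j < dim_col (entry_conj P)"
    then show "mat_adjoint (entry_conj P) $$ (i,j) = entry_conj P $$ (i,j)"
      using PC herm_entry[OF PC PH, of j i] by simp
  qed (use PC in auto)
  moreover have "entry_conj P * entry_conj P = entry_conj P"
    using entry_conj_mult[OF PC PC] PP by simp
  ultimately show ?thesis using PC unfolding projm_def by simp
qed

lemma PVM_projm: "PVM d P \<Longrightarrow> projm d (P a)"
  unfolding PVM_def projm_def hermitian_mat_def by auto

lemma msum_carrier[simp]: "msum d P \<in> carrier_mat d d" unfolding msum_def by simp

lemma msum_index[simp]: "i < d \<Longrightarrow> j < d \<Longrightarrow> msum d P $$ (i,j) = (\<Sum>a\<in>UNIV. P a $$ (i,j))"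
  unfolding msum_def by simp

lemma mtrace_msum: assumes "A \<in> carrier_mat d d" "\<And>a. (P :: 'a::finite \<Rightarrow> complex mat) a \<in> carrier_mat d d"
  shows "mtrace (msum d P * A) = (\<Sum>a\<in>UNIV. mtrace (P a * A))"
proof -
  have "mtrace (msum d P * A) = (\<Sum>i<d. \<Sum>k<d. \<Sum>a\<in>UNIV. P a $$ (i,k) * A $$ (k,i))"
    using assms by (simp add: mtrace_mult[of _ d d] sum_distrib_right)
  also have "\<dots> = (\<Sum>i<d. \<Sum>a\<in>UNIV. \<Sum>k<d. P a $$ (i,k) * A $$ (k,i))"
    by (rule sum.cong[OF refl], rule sum.swap)
  also have "\<dots> = (\<Sum>a\<in>UNIV. \<Sum>i<d. \<Sum>k<d. P a $$ (i,k) * A $$ (k,i))"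
    by (rule sum.swap)
  also have "\<dots> = (\<Sum>a\<in>UNIV. mtrace (P a * A))"
    using assms by (simp add: mtrace_mult[of _ d d])
  finally show ?thesis .
qed

lemma msum_entry_conj: assumes "msum d P = 1\<^sub>m d" and PC: "\<And>a. P a \<in> carrier_mat d d"
  shows "msum d (\<lambda>a. entry_conj (P a)) = 1\<^sub>m d"
proof (rule eq_matI)
  fix i j assume ij: "i < dim_row (1\<^sub>m d)" "j < dim_col (1\<^sub>m d)"
  have "msum d P $$ (i,j) = 1\<^sub>m d $$ (i,j)" using assms by simp
  then have "(\<Sum>a\<in>UNIV. P a $$ (i,j)) = (if i = j then 1 else 0)" using ij by simp
  moreover have dims: "\<And>a. dim_row (P a) = d" "\<And>a. dim_col (P a) = d" using PC by auto
  moreover have "msum d (\<lambda>a. entry_conj (P a)) $$ (i,j) = cnj (\<Sum>a\<in>UNIV. P a $$ (i,j))"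
    using ij dims by simp
  ultimately show "msum d (\<lambda>a. entry_conj (P a)) $$ (i,j) = 1\<^sub>m d $$ (i,j)"
    using ij by simp
qed (auto simp: msum_def)

lemma sum_reindex_dd: fixes f :: "nat \<Rightarrow> 'b::comm_monoid_add" and d :: nat
  shows "(\<Sum>p<d*d. f p) = (\<Sum>s<d. \<Sum>u<d. f (s*d+u))"
proof -
  let ?g = "\<lambda>(s,u). s*d+u"
  have inj: "inj_on ?g ({..<d} \<times> {..<d})"
  proof (rule inj_onI, clarify)
    fix s u s' u' assume "s < d" "u < d" "s' < d" "u' < d" and eq: "s*d+u = s'*d+u'"
    then have d0: "d \<noteq> 0" by auto
    have "(u + s*d) div d = s" "(u' + s'*d) div d = s'" "(u + s*d) mod d = u" "(u' + s'*d) mod d = u'"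
      using d0 \<open>u<d\<close> \<open>u'<d\<close> by simp_all
    then have "(s*d+u) div d = s" "(s'*d+u') div d = s'" "(s*d+u) mod d = u" "(s'*d+u') mod d = u'"
      by (simp_all add: add.commute)
    then show "s = s' \<and> u = u'" using eq by metis
  qed
  have img: "?g ` ({..<d} \<times> {..<d}) = {..<d*d}"
  proof
    have bnd: "\<And>s u. s < d \<Longrightarrow> u < d \<Longrightarrow> s*d+u < d*d"
    proof -
      fix s u assume "s < d" "u < d"
      then have "s*d+u < s*d + d" by simp
      also have "\<dots> = (s+1)*d" by simp
      also have "\<dots> \<le> d*d" using \<open>s<d\<close> mult_le_mono1[of "s+1" d d] by simp
      finally show "s*d+u < d*d" .
    qed
    then show "?g ` ({..<d} \<times> {..<d}) \<subseteq> {..<d*d}" by auto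
    show "{..<d*d} \<subseteq> ?g ` ({..<d} \<times> {..<d})"
    proof
      fix p assume "p \<in> {..<d*d}"
      then have p: "p < d*d" by simp
      then have "d > 0" by (cases d) auto
      then have "p div d < d" "p mod d < d" using p by (auto simp: less_mult_imp_div_less)
      moreover have "p = (p div d)*d + p mod d" by simp
      ultimately show "p \<in> ?g ` ({..<d} \<times> {..<d})" by (auto intro!: image_eqI[of _ _ "(p div d, p mod d)"])
    qed
  qed
  have "(\<Sum>p<d*d. f p) = (\<Sum>x\<in>{..<d} \<times> {..<d}. f (?g x))"
    using sum.reindex[OF inj, of f] img by simp
  also have "\<dots> = (\<Sum>s<d. \<Sum>u<d. f (s*d+u))" by (simp add: sum.cartesian_product case_prod_beta)
  finally show ?thesis .
qed

context
  fixes d :: nat and lam :: "complex mat"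
  assumes lamC: "lam \<in> carrier_mat d d" and lamH: "mat_adjoint lam = lam" and lamT: "mtrace (lam * lam) = 1"
begin

lemma mult_d[simp]: "A \<in> carrier_mat d d \<Longrightarrow> B \<in> carrier_mat d d \<Longrightarrow> A * B \<in> carrier_mat d d"
  by auto
lemma minus_d[simp]: "A \<in> carrier_mat d d \<Longrightarrow> B \<in> carrier_mat d d \<Longrightarrow> A - B \<in> carrier_mat d d"
  by auto
lemma assoc_d[simp]: "A \<in> carrier_mat d d \<Longrightarrow> B \<in> carrier_mat d d \<Longrightarrow> C \<in> carrier_mat d d \<Longrightarrow> A * B * C = A * (B * C)"
  by (rule assoc_mult_mat)
lemma minus_mult_d: "(A::complex mat) \<in> carrier_mat d d \<Longrightarrow> B \<in> carrier_mat d d \<Longrightarrow> C \<in> carrier_mat d d \<Longrightarrow> (A - B) * C = A * C - B * C"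
  by (rule minus_mult_distrib_mat)
lemma mult_minus_d: "(A::complex mat) \<in> carrier_mat d d \<Longrightarrow> B \<in> carrier_mat d d \<Longrightarrow> C \<in> carrier_mat d d \<Longrightarrow> A * (B - C) = A * B - A * C"
  by (rule mult_minus_distrib_mat)
lemma mtrace_minus_d: "(A::complex mat) \<in> carrier_mat d d \<Longrightarrow> B \<in> carrier_mat d d \<Longrightarrow> mtrace (A - B) = mtrace A - mtrace B"
  by (rule mtrace_minus)
lemma one_mult_d[simp]: "(A::complex mat) \<in> carrier_mat d d \<Longrightarrow> 1\<^sub>m d * A = A"
  by (rule left_mult_one_mat)
lemma lamC'[simp]: "lam \<in> carrier_mat d d" by (rule lamC)

lemma frob_lam: "frob_norm lam = 1"
proof -
  have "(frob_norm lam)^2 = 1" using frob_sq_tr[OF lamC] lamH lamT by simp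
  then show ?thesis using frob_nonneg[of lam] by (simp add: power2_eq_1_iff)
qed

lemma q_nonneg: assumes P: "projm d P" and Q: "projm d Q"
  shows "Re (mtrace (lam * (P * (lam * Q)))) = (frob_norm (P * (lam * Q)))^2"
proof -
  note PC = projmD(1)[OF P] and QC = projmD(1)[OF Q]
  have Y: "P * (lam * Q) \<in> carrier_mat d d" using PC QC lamC by simp
  have adj: "mat_adjoint (P * (lam * Q)) = Q * (lam * P)"
    using adj_mult[OF PC, of "lam * Q" d] adj_mult[OF lamC QC] projmD[OF P] projmD[OF Q] lamH lamC PC QC
    by simp
  have "mtrace (mat_adjoint (P * (lam * Q)) * (P * (lam * Q))) = mtrace (Q * (lam * (P * (lam * Q))))"
    unfolding adj using PC QC lamC projm_idem2[OF P, of "lam * Q" d] by simp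
  also have "\<dots> = mtrace ((lam * (P * (lam * Q))) * Q)"
    by (rule mtrace_comm[of _ d d]) (use PC QC lamC in simp_all)
  also have "\<dots> = mtrace (lam * (P * (lam * Q)))"
    using PC QC lamC projmD(3)[OF Q] by simp
  finally show ?thesis using frob_sq_tr[OF Y] by simp
qed

lemma diag_id: assumes E: "projm d Ea" and F: "projm d Fa"
  shows "(frob_norm (Ea * lam - lam * Fa))^2 = Re (mtrace (Ea * (lam * lam))) + Re (mtrace (Fa * (lam * lam)))
     - 2 * Re (mtrace (lam * (Fa * (lam * Ea))))"
proof -
  note EC = projmD(1)[OF E] and FC = projmD(1)[OF F]
  have c: "Ea * lam \<in> carrier_mat d d" "lam * Fa \<in> carrier_mat d d" using EC FC lamC by auto
  have a1: "mat_adjoint (Ea * lam) = lam * Ea" using adj_mult[OF EC lamC] lamH projmD(2)[OF E] by simp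
  have a2: "mat_adjoint (lam * Fa) = Fa * lam" using adj_mult[OF lamC FC] lamH projmD(2)[OF F] by simp
  have h1: "mtrace (mat_adjoint (Ea * lam) * (Ea * lam)) = mtrace (Ea * (lam * lam))"
  proof -
    have "mtrace (mat_adjoint (Ea * lam) * (Ea * lam)) = mtrace (lam * (Ea * lam))"
      unfolding a1 using EC lamC projm_idem2[OF E lamC] by simp
    also have "\<dots> = mtrace ((Ea * lam) * lam)" by (rule mtrace_comm[of _ d d]) (use EC lamC in simp_all)
    finally show ?thesis using EC lamC by simp
  qed
  have h2: "mtrace (mat_adjoint (lam * Fa) * (lam * Fa)) = mtrace (Fa * (lam * lam))"
  proof -
    have "mtrace (mat_adjoint (lam * Fa) * (lam * Fa)) = mtrace (Fa * (lam * (lam * Fa)))"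
      unfolding a2 using FC lamC by simp
    also have "\<dots> = mtrace ((lam * (lam * Fa)) * Fa)" by (rule mtrace_comm[of _ d d]) (use FC lamC in simp_all)
    also have "\<dots> = mtrace ((lam * lam) * Fa)" using FC lamC projmD(3)[OF F] by simp
    also have "\<dots> = mtrace (Fa * (lam * lam))" by (rule mtrace_comm[of _ d d]) (use FC lamC in simp_all)
    finally show ?thesis .
  qed
  have h3: "mtrace (mat_adjoint (Ea * lam) * (lam * Fa)) = mtrace (lam * (Fa * (lam * Ea)))"
  proof -
    have "mtrace (mat_adjoint (Ea * lam) * (lam * Fa)) = mtrace ((lam * Ea) * (lam * Fa))"
      unfolding a1 ..
    also have "\<dots> = mtrace ((lam * Fa) * (lam * Ea))" by (rule mtrace_comm[of _ d d]) (use FC EC lamC in simp_all)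
    finally show ?thesis using FC EC lamC by simp
  qed
  show ?thesis unfolding frob_diff[OF c] frob_sq_tr[OF c(1)] frob_sq_tr[OF c(2)] h1 h2 h3 ..
qed

lemma key_bound: assumes Fa: "projm d Fa" and Fb: "projm d Fb" and Ea: "projm d Ea" and Eb: "projm d Eb"
  and ea: "frob_norm (Ea * lam - lam * Fa) \<le> e" and eb: "frob_norm (Eb * lam - lam * Fb) \<le> e"
  and q: "Re (mtrace (lam * (Fb * (lam * Ea)))) \<le> \<delta>"
  shows "(frob_norm ((Fa * Fb) * lam))^2 \<le> 3 * e + \<delta>"
proof -
  note FaC[simp] = projmD(1)[OF Fa] and FbC[simp] = projmD(1)[OF Fb]
    and EaC[simp] = projmD(1)[OF Ea] and EbC[simp] = projmD(1)[OF Eb]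
  note FbI[simp] = projm_idem2[OF Fb] and FaI[simp] = projm_idem2[OF Fa]
  have adjD: "\<And>P Q. projm d P \<Longrightarrow> projm d Q \<Longrightarrow> mat_adjoint (P * lam - lam * Q) = lam * P - Q * lam"
  proof -
    fix P Q assume P: "projm d P" and Q: "projm d Q"
    note [simp] = projmD[OF P] projmD[OF Q]
    show "mat_adjoint (P * lam - lam * Q) = lam * P - Q * lam"
      by (simp add: adj_minus[of _ d d] adj_mult[of _ d d _ d] lamH)
  qed
  define Da where "Da = Fa * lam - lam * Ea"
  define Db where "Db = Fb * lam - lam * Eb"
  define Db' where "Db' = Eb * lam - lam * Fb"
  have [simp]: "Da \<in> carrier_mat d d" "Db \<in> carrier_mat d d" "Db' \<in> carrier_mat d d"
    unfolding Da_def Db_def Db'_def by auto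
  have nDa: "frob_norm Da \<le> e"
  proof -
    have "frob_norm Da = frob_norm (mat_adjoint Da)" using frob_adj[of Da d d] by simp
    also have "mat_adjoint Da = lam * Fa - Ea * lam" unfolding Da_def by (rule adjD[OF Fa Ea])
    also have "frob_norm \<dots> = frob_norm (Ea * lam - lam * Fa)" by (rule frob_minus_comm[of _ d d]) auto
    finally show ?thesis using ea by simp
  qed
  have nDb: "frob_norm Db \<le> e"
  proof -
    have "frob_norm Db = frob_norm (mat_adjoint Db)" using frob_adj[of Db d d] by simp
    also have "mat_adjoint Db = lam * Fb - Eb * lam" unfolding Db_def by (rule adjD[OF Fb Eb])
    also have "frob_norm \<dots> = frob_norm (Eb * lam - lam * Fb)" by (rule frob_minus_comm[of _ d d]) auto
    finally show ?thesis using eb by simp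
  qed
  have nDb': "frob_norm Db' \<le> e" using eb unfolding Db'_def .
  have e0: "e \<ge> 0" using nDa frob_nonneg[of Da] by simp
  define T0 where "T0 = mtrace (Fb * (Fa * (Fb * (lam * lam))))"
  define T1 where "T1 = mtrace (Fb * (Fa * (lam * (Eb * lam))))"
  define T2 where "T2 = mtrace (Fb * (lam * (Ea * (Eb * lam))))"
  define T3 where "T3 = mtrace (Fb * (lam * (Ea * (lam * Fb))))"
  have N: "(frob_norm ((Fa * Fb) * lam))^2 = Re T0"
  proof -
    have a: "mat_adjoint ((Fa * Fb) * lam) = lam * (Fb * Fa)"
      using adj_mult[of "Fa * Fb" d d lam d] adj_mult[of Fa d d Fb d] projmD(2)[OF Fa] projmD(2)[OF Fb] lamH
      by simp
    have "mtrace (mat_adjoint ((Fa * Fb) * lam) * ((Fa * Fb) * lam)) = mtrace (lam * (Fb * (Fa * (Fb * lam))))"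
      unfolding a using projm_idem2[OF Fa, of "Fb * lam" d] by simp
    also have "\<dots> = mtrace ((Fb * (Fa * (Fb * lam))) * lam)" by (rule mtrace_comm[of _ d d]) auto
    finally show ?thesis unfolding T0_def using frob_sq_tr[of "(Fa * Fb) * lam" d d] by simp
  qed
  have d01: "T0 - T1 = mtrace ((Fb * (Fa * Db)) * lam)"
    unfolding T0_def T1_def Db_def
    by (simp add: minus_mult_d mult_minus_d mtrace_minus_d)
  have d12: "T1 - T2 = mtrace ((Fb * Da) * (Eb * lam))"
    unfolding T1_def T2_def Da_def
    by (simp add: minus_mult_d mult_minus_d mtrace_minus_d)
  have d23: "T2 - T3 = mtrace ((Fb * (lam * Ea)) * Db')"
    unfolding T2_def T3_def Db'_def
    by (simp add: minus_mult_d mult_minus_d mtrace_minus_d)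
  have b01: "cmod (T0 - T1) \<le> e"
  proof -
    have "cmod (T0 - T1) \<le> frob_norm (Fb * (Fa * Db)) * frob_norm lam"
      unfolding d01 by (rule frob_cs[of _ d d]) auto
    also have "\<dots> = frob_norm (Fb * (Fa * Db))" using frob_lam by simp
    also have "\<dots> \<le> frob_norm (Fa * Db)" by (rule frob_proj_left[OF Fb, of _ d]) auto
    also have "\<dots> \<le> frob_norm Db" by (rule frob_proj_left[OF Fa, of _ d]) auto
    finally show ?thesis using nDb by simp
  qed
  have b12: "cmod (T1 - T2) \<le> e"
  proof -
    have "cmod (T1 - T2) \<le> frob_norm (Fb * Da) * frob_norm (Eb * lam)"
      unfolding d12 by (rule frob_cs[of _ d d]) auto
    also have "\<dots> \<le> frob_norm Da * 1"
      using frob_proj_left[OF Fb, of Da d] frob_proj_left[OF Eb, of lam d] frob_lam frob_nonneg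
      by (intro mult_mono) auto
    finally show ?thesis using nDa by simp
  qed
  have b23: "cmod (T2 - T3) \<le> e"
  proof -
    have "cmod (T2 - T3) \<le> frob_norm (Fb * (lam * Ea)) * frob_norm Db'"
      unfolding d23 by (rule frob_cs[of _ d d]) auto
    also have "\<dots> \<le> 1 * frob_norm Db'"
      using frob_proj_left[OF Fb, of "lam * Ea" d] frob_proj_right[OF Ea, of lam d] frob_lam frob_nonneg
      by (intro mult_mono) auto
    finally show ?thesis using nDb' by simp
  qed
  have t3: "T3 = mtrace (lam * (Fb * (lam * Ea)))"
  proof -
    have "T3 = mtrace ((lam * (Ea * (lam * Fb))) * Fb)" unfolding T3_def by (rule mtrace_comm[of _ d d]) auto
    also have "\<dots> = mtrace ((lam * Ea) * (lam * Fb))" using projmD(3)[OF Fb] by simp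
    also have "\<dots> = mtrace ((lam * Fb) * (lam * Ea))" by (rule mtrace_comm[of _ d d]) auto
    finally show ?thesis by simp
  qed
  have "Re T0 = Re (T0 - T1) + Re (T1 - T2) + Re (T2 - T3) + Re T3" by simp
  also have "\<dots> \<le> e + e + e + \<delta>"
    using b01 b12 b23 q[folded t3] abs_Re_le_cmod[of "T0 - T1"] abs_Re_le_cmod[of "T1 - T2"] abs_Re_le_cmod[of "T2 - T3"]
    by linarith
  finally show ?thesis using N by simp
qed

lemma divmod_dd: "s < d \<Longrightarrow> u < d \<Longrightarrow> (s*d+u) div d = s \<and> (s*d+u) mod d = u"
proof -
  assume "s < d" "u < d"
  then have "d \<noteq> 0" by auto
  then have "(u + s*d) div d = s \<and> (u + s*d) mod d = u" using \<open>u<d\<close> by simp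
  then show ?thesis by (simp add: add.commute)
qed

lemma qform_tr: assumes AC: "A \<in> carrier_mat d d" and AH: "mat_adjoint A = A" and BC: "B \<in> carrier_mat d d"
  shows "qform (kron d A B) (state_vec d lam) = mtrace (lam * (B * (lam * entry_conj A)))"
proof -
  have L0: "qform (kron d A B) (state_vec d lam) =
     (\<Sum>p<d*d. cnj (lam $$ (p mod d, p div d)) * (\<Sum>q<d*d. (A $$ (p div d, q div d) * B $$ (p mod d, q mod d)) * lam $$ (q mod d, q div d)))"
    unfolding qform_def kron_def state_vec_def
    by (auto simp: scalar_prod_def atLeast0LessThan intro!: sum.cong)
  have L: "qform (kron d A B) (state_vec d lam) =
     (\<Sum>s<d. \<Sum>u<d. cnj (lam $$ (u,s)) * (\<Sum>s'<d. \<Sum>u'<d. (A $$ (s,s') * B $$ (u,u')) * lam $$ (u',s')))"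
    unfolding L0 sum_reindex_dd
    by (intro sum.cong refl) (simp add: divmod_dd sum_reindex_dd)
  have R: "mtrace (lam * (B * (lam * entry_conj A))) =
     (\<Sum>s<d. \<Sum>u<d. lam $$ (s,u) * (\<Sum>u'<d. B $$ (u,u') * (\<Sum>s'<d. lam $$ (u',s') * cnj (A $$ (s',s)))))"
    unfolding mtrace_mult[OF lamC mult_d[OF BC mult_d[OF lamC entry_conj_carrier[OF AC]]]]
    apply (intro sum.cong refl arg_cong[where f="\<lambda>x. _ * x"])
    subgoal for s u
      apply (subst mult_index[OF BC mult_d[OF lamC entry_conj_carrier[OF AC]]], simp, simp)
      apply (intro sum.cong refl arg_cong[where f="\<lambda>x. _ * x"])
      apply (subst mult_index[OF lamC entry_conj_carrier[OF AC]], simp, simp)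
      apply (intro sum.cong refl arg_cong[where f="\<lambda>x. _ * x"])
      using AC by simp
    done
  have inner: "\<And>s u. s < d \<Longrightarrow> u < d \<Longrightarrow>
     cnj (lam $$ (u,s)) * (\<Sum>s'<d. \<Sum>u'<d. (A $$ (s,s') * B $$ (u,u')) * lam $$ (u',s'))
     = lam $$ (s,u) * (\<Sum>u'<d. B $$ (u,u') * (\<Sum>s'<d. lam $$ (u',s') * cnj (A $$ (s',s))))"
  proof -
    fix s u assume su: "s < d" "u < d"
    have h1: "cnj (lam $$ (u,s)) = lam $$ (s,u)" using herm_entry[OF lamC lamH su] by simp
    have "(\<Sum>u'<d. B $$ (u,u') * (\<Sum>s'<d. lam $$ (u',s') * cnj (A $$ (s',s))))
        = (\<Sum>u'<d. B $$ (u,u') * (\<Sum>s'<d. lam $$ (u',s') * A $$ (s,s')))"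
      using herm_entry[OF AC AH su(1)] by (intro sum.cong refl arg_cong[where f="\<lambda>x. _ * x"]) auto
    also have "\<dots> = (\<Sum>s'<d. \<Sum>u'<d. (A $$ (s,s') * B $$ (u,u')) * lam $$ (u',s'))"
      by (subst sum.swap) (simp add: sum_distrib_left mult_ac)
    finally show "cnj (lam $$ (u,s)) * (\<Sum>s'<d. \<Sum>u'<d. (A $$ (s,s') * B $$ (u,u')) * lam $$ (u',s'))
     = lam $$ (s,u) * (\<Sum>u'<d. B $$ (u,u') * (\<Sum>s'<d. lam $$ (u',s') * cnj (A $$ (s',s))))"
      using h1 by simp
  qed
  show ?thesis unfolding L R by (intro sum.cong refl) (simp add: inner)
qed

lemma sum_tr_F: assumes F: "\<And>b. projm d (F b)" and sumF: "msum d F = 1\<^sub>m d" and X: "X \<in> carrier_mat d d"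
  shows "(\<Sum>b\<in>UNIV. mtrace (lam * (F b * (lam * X)))) = mtrace (X * (lam * lam))"
proof -
  note FC[simp] = projmD(1)[OF F]
  have "\<And>b. mtrace (lam * (F b * (lam * X))) = mtrace (F b * (lam * (X * lam)))"
  proof -
    fix b
    have "mtrace (lam * (F b * (lam * X))) = mtrace ((F b * (lam * X)) * lam)"
      by (rule mtrace_comm[of _ d d]) (use X in auto)
    then show "mtrace (lam * (F b * (lam * X))) = mtrace (F b * (lam * (X * lam)))" using X by simp
  qed
  then have "(\<Sum>b\<in>UNIV. mtrace (lam * (F b * (lam * X)))) = (\<Sum>b\<in>UNIV. mtrace (F b * (lam * (X * lam))))"
    by simp
  also have "\<dots> = mtrace (msum d F * (lam * (X * lam)))"
    by (rule mtrace_msum[symmetric]) (use X in auto)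
  also have "\<dots> = mtrace (lam * (X * lam))" unfolding sumF using X by simp
  also have "\<dots> = mtrace ((X * lam) * lam)" by (rule mtrace_comm[of _ d d]) (use X in auto)
  finally show ?thesis using X by simp
qed

lemma sum_tr_rho: assumes E: "\<And>a. projm d (E a)" and sumE: "msum d E = 1\<^sub>m d"
  shows "(\<Sum>a\<in>UNIV. mtrace (E a * (lam * lam))) = 1"
proof -
  note EC[simp] = projmD(1)[OF E]
  have "(\<Sum>a\<in>UNIV. mtrace (E a * (lam * lam))) = mtrace (msum d E * (lam * lam))"
    by (rule mtrace_msum[symmetric]) auto
  also have "\<dots> = 1" unfolding sumE using lamT by simp
  finally show ?thesis .
qed

lemma nested_le: fixes f :: "'a::finite \<Rightarrow> 'b::finite \<Rightarrow> real"
  assumes "\<And>a b. f a b \<ge> 0" shows "f a b \<le> (\<Sum>a\<in>UNIV. \<Sum>b\<in>UNIV. f a b)"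
proof -
  have "f a b \<le> (\<Sum>b\<in>UNIV. f a b)" by (rule member_le_sum) (use assms in auto)
  also have "\<dots> \<le> (\<Sum>a\<in>UNIV. \<Sum>b\<in>UNIV. f a b)" by (rule member_le_sum) (use assms in \<open>auto intro: sum_nonneg\<close>)
  finally show ?thesis .
qed

lemma strat_bounds:
  fixes eta :: "'i::finite \<Rightarrow> 'i \<Rightarrow> real" and V :: "'a::finite \<Rightarrow> 'a \<Rightarrow> 'i \<Rightarrow> 'i \<Rightarrow> bool"
    and E F :: "'i \<Rightarrow> 'a \<Rightarrow> complex mat"
  assumes E: "\<And>i a. projm d (E i a)" and F: "\<And>i a. projm d (F i a)"
    and sumE: "\<And>i. msum d (E i) = 1\<^sub>m d" and sumF: "\<And>i. msum d (F i) = 1\<^sub>m d"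
    and etam: "\<And>i j. eta i j \<ge> m" and m0: "m > 0" and etasum: "(\<Sum>i\<in>UNIV. \<Sum>j\<in>UNIV. eta i j) = 1"
    and win: "win_prob eta V d E F lam \<ge> 1 - eps"
    and sync: "\<And>i a b. a \<noteq> b \<Longrightarrow> \<not> V a b i i"
  shows "\<And>i a. frob_norm (entry_conj (E i a) * lam - lam * F i a) \<le> sqrt (2 * (eps / m))"
    and "\<And>i j a b. \<not> V a b i j \<Longrightarrow> (frob_norm ((F i a * F j b) * lam))^2 \<le> 3 * sqrt (2 * (eps / m)) + eps / m"
proof -
  define Eb where "Eb i a = entry_conj (E i a)" for i a
  have Eb: "\<And>i a. projm d (Eb i a)" unfolding Eb_def by (rule projm_entry_conj[OF E])
  have sumEb: "\<And>i. msum d (Eb i) = 1\<^sub>m d" unfolding Eb_def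
    by (rule msum_entry_conj[OF sumE projmD(1)[OF E]])
  define q where "q i j a b = Re (mtrace (lam * (F j b * (lam * Eb i a))))" for i j a b
  have qnn: "\<And>i j a b. q i j a b \<ge> 0" unfolding q_def using q_nonneg[OF F Eb] by simp
  have qf: "\<And>i j a b. Re (qform (kron d (E i a) (F j b)) (state_vec d lam)) = q i j a b"
    unfolding q_def Eb_def using qform_tr projmD[OF E] projmD[OF F] by simp
  have sum1: "\<And>i j. (\<Sum>a\<in>UNIV. \<Sum>b\<in>UNIV. q i j a b) = 1"
  proof -
    fix i j
    have "(\<Sum>a\<in>UNIV. \<Sum>b\<in>UNIV. mtrace (lam * (F j b * (lam * Eb i a)))) = (\<Sum>a\<in>UNIV. mtrace (Eb i a * (lam * lam)))"
      using sum_tr_F[OF F sumF projmD(1)[OF Eb]] by simp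
    also have "\<dots> = 1" by (rule sum_tr_rho[OF Eb sumEb])
    finally have "Re (\<Sum>a\<in>UNIV. \<Sum>b\<in>UNIV. mtrace (lam * (F j b * (lam * Eb i a)))) = Re 1" by (rule arg_cong)
    then show "(\<Sum>a\<in>UNIV. \<Sum>b\<in>UNIV. q i j a b) = 1" unfolding q_def Re_sum by simp
  qed
  define L where "L i j = (\<Sum>a\<in>UNIV. \<Sum>b\<in>UNIV. if V a b i j then 0 else q i j a b)" for i j
  have Lnn: "\<And>i j. L i j \<ge> 0" unfolding L_def using qnn by (auto intro!: sum_nonneg)
  have split: "\<And>i j. (\<Sum>a\<in>UNIV. \<Sum>b\<in>UNIV. if V a b i j then q i j a b else 0) = 1 - L i j"
  proof -
    fix i j
    have "(\<Sum>a\<in>UNIV. \<Sum>b\<in>UNIV. if V a b i j then q i j a b else 0) + L i j = (\<Sum>a\<in>UNIV. \<Sum>b\<in>UNIV. q i j a b)"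
      unfolding L_def sum.distrib[symmetric] by (intro sum.cong refl) auto
    then show "(\<Sum>a\<in>UNIV. \<Sum>b\<in>UNIV. if V a b i j then q i j a b else 0) = 1 - L i j" using sum1 by simp
  qed
  have "win_prob eta V d E F lam = (\<Sum>i\<in>UNIV. \<Sum>j\<in>UNIV. eta i j * (1 - L i j))"
    unfolding win_prob_def qf split ..
  also have "\<dots> = 1 - (\<Sum>i\<in>UNIV. \<Sum>j\<in>UNIV. eta i j * L i j)"
    using etasum by (simp add: right_diff_distrib sum_subtractf)
  finally have tot: "(\<Sum>i\<in>UNIV. \<Sum>j\<in>UNIV. eta i j * L i j) \<le> eps" using win by simp
  have eta0: "\<And>i j. eta i j > 0" using etam m0 by (meson less_le_trans)
  have Lb: "\<And>i j. L i j \<le> eps / m"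
  proof -
    fix i j
    have nn: "\<And>i j. eta i j * L i j \<ge> 0" using eta0 Lnn by (simp add: less_imp_le)
    have "eta i j * L i j \<le> eps" using nested_le[of "\<lambda>i j. eta i j * L i j" i j, OF nn] tot by linarith
    moreover have "m * L i j \<le> eta i j * L i j" by (rule mult_right_mono[OF etam Lnn])
    ultimately have "m * L i j \<le> eps" by linarith
    then show "L i j \<le> eps / m" using m0 by (simp add: field_simps)
  qed
  have qb: "\<And>i j a b. \<not> V a b i j \<Longrightarrow> q i j a b \<le> eps / m"
  proof -
    fix i j a b assume nv: "\<not> V a b i j"
    have "q i j a b \<le> L i j" unfolding L_def
      using nested_le[of "\<lambda>a b. if V a b i j then 0 else q i j a b" a b] qnn nv by simp
    then show "q i j a b \<le> eps / m" using Lb[of i j] by simp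
  qed
  define e where "e = sqrt (2 * (eps / m))"
  have diag: "\<And>i a. frob_norm (Eb i a * lam - lam * F i a) \<le> e"
  proof -
    fix i a0
    have off: "(\<Sum>a\<in>UNIV. \<Sum>b\<in>UNIV. if a = b then 0 else q i i a b) \<le> L i i"
      unfolding L_def using qnn sync by (intro sum_mono) auto
    have "(\<Sum>a\<in>UNIV. \<Sum>b\<in>UNIV. q i i a b) = (\<Sum>a\<in>UNIV. q i i a a) + (\<Sum>a\<in>UNIV. \<Sum>b\<in>UNIV. if a = b then 0 else q i i a b)"
    proof -
      have "\<And>a. (\<Sum>b\<in>UNIV. q i i a b) = q i i a a + (\<Sum>b\<in>UNIV. if a = b then 0 else q i i a b)"
      proof -
        fix a
        have "(\<Sum>b\<in>UNIV. q i i a b) = (\<Sum>b\<in>UNIV. (if a = b then q i i a b else 0) + (if a = b then 0 else q i i a b))"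
          by (intro sum.cong) auto
        also have "\<dots> = q i i a a + (\<Sum>b\<in>UNIV. if a = b then 0 else q i i a b)"
          by (simp add: sum.distrib)
        finally show "(\<Sum>b\<in>UNIV. q i i a b) = q i i a a + (\<Sum>b\<in>UNIV. if a = b then 0 else q i i a b)" .
      qed
      then show ?thesis by (simp add: sum.distrib)
    qed
    then have dsum: "(\<Sum>a\<in>UNIV. q i i a a) \<ge> 1 - eps / m" using sum1[of i i] off Lb[of i i] by simp
    have "(\<Sum>a\<in>UNIV. (frob_norm (Eb i a * lam - lam * F i a))^2)
        = (\<Sum>a\<in>UNIV. Re (mtrace (Eb i a * (lam * lam)))) + (\<Sum>a\<in>UNIV. Re (mtrace (F i a * (lam * lam)))) - 2 * (\<Sum>a\<in>UNIV. q i i a a)"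
      unfolding diag_id[OF Eb F] q_def by (simp add: sum.distrib sum_subtractf sum_distrib_left)
    also have "(\<Sum>a\<in>UNIV. Re (mtrace (Eb i a * (lam * lam)))) = 1"
      using arg_cong[where f=Re, OF sum_tr_rho[OF Eb sumEb, of i]] unfolding Re_sum by simp
    also have "(\<Sum>a\<in>UNIV. Re (mtrace (F i a * (lam * lam)))) = 1"
      using arg_cong[where f=Re, OF sum_tr_rho[OF F sumF, of i]] unfolding Re_sum by simp
    finally have "(\<Sum>a\<in>UNIV. (frob_norm (Eb i a * lam - lam * F i a))^2) \<le> 2 * (eps / m)"
      using dsum by simp
    then have "(frob_norm (Eb i a0 * lam - lam * F i a0))^2 \<le> 2 * (eps / m)"
      using member_le_sum[of a0 UNIV "\<lambda>a. (frob_norm (Eb i a * lam - lam * F i a))^2"] by simp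
    then show "frob_norm (Eb i a0 * lam - lam * F i a0) \<le> e"
      unfolding e_def using frob_nonneg real_le_rsqrt by blast
  qed
  show "\<And>i a. frob_norm (entry_conj (E i a) * lam - lam * F i a) \<le> sqrt (2 * (eps / m))"
    using diag unfolding Eb_def e_def .
  show "\<And>i j a b. \<not> V a b i j \<Longrightarrow> (frob_norm ((F i a * F j b) * lam))^2 \<le> 3 * sqrt (2 * (eps / m)) + eps / m"
  proof -
    fix i j a b assume nv: "\<not> V a b i j"
    show "(frob_norm ((F i a * F j b) * lam))^2 \<le> 3 * sqrt (2 * (eps / m)) + eps / m"
      using key_bound[OF F F Eb Eb diag diag qb[OF nv, unfolded q_def]] unfolding e_def .
  qed
qed

end

lemma feval_fsum: assumes FC: "\<And>a. F i a \<in> carrier_mat d d" and dist: "distinct xs"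
  shows "feval d F (fsum (map (Gen i) xs)) = mat d d (\<lambda>pq. \<Sum>a\<in>set xs. F i a $$ pq)"
  using dist
proof (induction xs)
  case Nil
  then show ?case unfolding fsum_def by (intro eq_matI) auto
next
  case (Cons x xs)
  have "fsum (map (Gen i) (x # xs)) = Add (Gen i x) (fsum (map (Gen i) xs))" unfolding fsum_def by simp
  then have "feval d F (fsum (map (Gen i) (x # xs))) = F i x + mat d d (\<lambda>pq. \<Sum>a\<in>set xs. F i a $$ pq)"
    using Cons by simp
  also have "\<dots> = mat d d (\<lambda>pq. \<Sum>a\<in>set (x#xs). F i a $$ pq)"
    using Cons.prems FC[of x] by (intro eq_matI) auto
  finally show ?case .
qed

lemma add_neg_zero: "(X::complex mat) \<in> carrier_mat n m \<Longrightarrow> X + - X = 0\<^sub>m n m"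
  by (intro eq_matI) auto

lemma frob_zero: "frob_norm (0\<^sub>m n m :: complex mat) = 0"
  using frob_eq[of "0\<^sub>m n m :: complex mat" n m] by simp

theorem mainTheorem8:
  fixes eta :: "'i::finite \<Rightarrow> 'i \<Rightarrow> real"
    and V :: "'a::finite \<Rightarrow> 'a \<Rightarrow> 'i \<Rightarrow> 'i \<Rightarrow> bool"
  assumes "synchronous_game eta V"
  shows "\<exists>C>0. \<forall>eps::real. 0 < eps \<and> eps \<le> 1 \<longrightarrow>
     (\<forall>(d::nat) E F lam. quantum_strategy d E F lam \<and> eps_perfect eta V d E F lam eps \<longrightarrow>
        eps_representation (sync_relations V) (rho_norm lam) d F (C * eps powr (1/4)) \<and>
        (synchronous_strategy E F \<longrightarrow>
           (\<forall>i a. frob_norm (F i a * lam - lam * F i a) \<le> C * eps powr (1/2))))"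
proof -
  have eta0: "\<And>i j. eta i j > 0" and etasum: "(\<Sum>i\<in>UNIV. \<Sum>j\<in>UNIV. eta i j) = 1"
    and sync: "\<And>i a b. a \<noteq> b \<Longrightarrow> \<not> V a b i i"
    using assms unfolding synchronous_game_def by auto
  define m where "m = Min (range (\<lambda>(i,j). eta i j))"
  have fin: "finite (range (\<lambda>(i,j). eta i j))" by simp
  have etam: "\<And>i j. eta i j \<ge> m" unfolding m_def
  proof -
    fix i j
    have "eta i j \<in> range (\<lambda>(i,j). eta i j)" by (rule range_eqI[of _ _ "(i,j)"]) simp
    then show "Min (range (\<lambda>(i,j). eta i j)) \<le> eta i j" by (rule Min_le[OF fin])
  qed
  have m0: "m > 0" unfolding m_def using Min_in[OF fin] eta0 by auto
  define K where "K = 3 * sqrt (2 / m) + 1 / m"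
  define C where "C = sqrt K + sqrt (2 / m) + 1"
  have K0: "K \<ge> 0" unfolding K_def using m0 by simp
  have C0: "C > 0" unfolding C_def using K0 m0 by (simp add: add_nonneg_pos)
  show ?thesis
  proof (rule exI[of _ C], intro conjI[OF C0] allI impI)
    fix eps :: real and d :: nat and E F :: "'i \<Rightarrow> 'a \<Rightarrow> complex mat" and lam
    assume epsr: "0 < eps \<and> eps \<le> 1"
      and st: "quantum_strategy d E F lam \<and> eps_perfect eta V d E F lam eps"
    have e0: "eps > 0" "eps \<le> 1" using epsr by auto
    have PVE: "\<And>i. PVM d (E i)" and PVF: "\<And>i. PVM d (F i)" and lp: "psd_mat d lam"
      and lamT: "mtrace (lam * lam) = 1" and win: "win_prob eta V d E F lam \<ge> 1 - eps"
      using st unfolding quantum_strategy_def eps_perfect_def by auto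
    have lamC: "lam \<in> carrier_mat d d" and lamH: "mat_adjoint lam = lam"
      using lp unfolding psd_mat_def hermitian_mat_def by auto
    have Ep: "\<And>i a. projm d (E i a)" by (rule PVM_projm[OF PVE])
    have Fp: "\<And>i a. projm d (F i a)" by (rule PVM_projm[OF PVF])
    have sE: "\<And>i. msum d (E i) = 1\<^sub>m d" and sF: "\<And>i. msum d (F i) = 1\<^sub>m d"
      using PVE PVF unfolding PVM_def by auto
    note SB0 = strat_bounds[where V=V and eta=eta and E=E and F=F and eps=eps and m=m, OF lamC lamH lamT Ep Fp sE sF etam m0 etasum win]
    have SB1: "\<And>i a. frob_norm (entry_conj (E i a) * lam - lam * F i a) \<le> sqrt (2 * (eps / m))"
      by (rule SB0(1), erule sync)
    have SB2: "\<And>i j a b. \<not> V a b i j \<Longrightarrow> (frob_norm ((F i a * F j b) * lam))^2 \<le> 3 * sqrt (2 * (eps / m)) + eps / m"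
      by (rule SB0(2), erule sync, assumption)
    have FC: "\<And>i a. F i a \<in> carrier_mat d d" using projmD(1)[OF Fp] .
    have sq: "sqrt (2 * (eps / m)) = sqrt (2 / m) * sqrt eps" by (simp add: real_sqrt_mult[symmetric])
    have epsq: "eps \<le> sqrt eps"
    proof -
      have "eps * eps \<le> eps" using e0 by (simp add: mult_le_cancel_left1)
      then show ?thesis by (intro real_le_rsqrt) (simp add: power2_eq_square)
    qed
    have p4: "eps powr (1/4) = sqrt (sqrt eps)"
    proof -
      have "sqrt (sqrt eps) = (eps powr (1/2)) powr (1/2)" using e0 by (simp add: powr_half_sqrt)
      also have "\<dots> = eps powr (1/4)" by (simp add: powr_powr)
      finally show ?thesis by simp
    qed
    have p2: "eps powr (1/2) = sqrt eps" using e0 by (simp add: powr_half_sqrt)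
    have pos4: "C * eps powr (1/4) \<ge> 0" using C0 e0 by simp
    have bnd: "\<And>i j a b. \<not> V a b i j \<Longrightarrow> rho_norm lam (F i a * F j b) \<le> C * eps powr (1/4)"
    proof -
      fix i j a b assume nv: "\<not> V a b i j"
      have "(frob_norm ((F i a * F j b) * lam))^2 \<le> 3 * sqrt (2 * (eps / m)) + eps / m" by (rule SB2[OF nv])
      also have "\<dots> \<le> 3 * (sqrt (2 / m) * sqrt eps) + sqrt eps / m"
        unfolding sq using epsq m0 by (simp add: divide_right_mono)
      also have "\<dots> = K * sqrt eps" unfolding K_def by (simp add: algebra_simps)
      finally have "frob_norm ((F i a * F j b) * lam) \<le> sqrt (K * sqrt eps)"
        by (rule real_le_rsqrt)
      also have "\<dots> = sqrt K * eps powr (1/4)" unfolding p4 by (simp add: real_sqrt_mult)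
      also have "\<dots> \<le> C * eps powr (1/4)" unfolding C_def using m0 by (intro mult_right_mono) auto
      finally show "rho_norm lam (F i a * F j b) \<le> C * eps powr (1/4)" unfolding rho_norm_def .
    qed
    have zr: "\<And>X. X = 0\<^sub>m d d \<Longrightarrow> rho_norm lam X \<le> C * eps powr (1/4)"
      unfolding rho_norm_def using lamC pos4 frob_zero by simp
    have rep: "eps_representation (sync_relations V) (rho_norm lam) d F (C * eps powr (1/4))"
      unfolding eps_representation_def
    proof
      fix r assume "r \<in> sync_relations V"
      then consider (c1) i a where "r = Add (Mul (Gen i a) (Gen i a)) (Neg (Gen i a))"
        | (c2) i a where "r = Add (Gen i a) (Neg (Star (Gen i a)))"
        | (c3) i xs where "r = Add (fsum (map (Gen i) xs)) (Neg Unit)" "distinct xs" "set xs = UNIV"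
        | (c4) i j a b where "r = Mul (Gen i a) (Gen j b)" "\<not> V a b i j"
        unfolding sync_relations_def
        apply (elim UnE CollectE exE conjE)
           apply (rule that(1), assumption)
          apply (rule that(2), assumption)
         apply (rule that(3), assumption, assumption, assumption)
        apply (rule that(4), assumption, assumption)
        done
      then show "rho_norm lam (feval d F r) \<le> C * eps powr (1/4)"
      proof cases
        case (c1 i a)
        then show ?thesis using zr projmD(3)[OF Fp[of i a]] add_neg_zero[OF FC[of i a]] by simp
      next
        case (c2 i a)
        then show ?thesis using zr projmD(2)[OF Fp[of i a]] add_neg_zero[OF FC[of i a]] by simp
      next
        case (c3 i xs)
        have "feval d F (fsum (map (Gen i) xs)) = msum d (F i)"
          unfolding feval_fsum[where F=F and i=i and d=d, OF FC c3(2)] c3(3) by (intro eq_matI) (auto simp: msum_def)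
        then show ?thesis using zr c3(1) sF[of i] add_neg_zero[of "1\<^sub>m d" d d] by simp
      next
        case (c4 i j a b)
        then show ?thesis using bnd by simp
      qed
    qed
    show "eps_representation (sync_relations V) (rho_norm lam) d F (C * eps powr (1/4)) \<and>
        (synchronous_strategy E F \<longrightarrow> (\<forall>i a. frob_norm (F i a * lam - lam * F i a) \<le> C * eps powr (1/2)))"
    proof (intro conjI rep impI allI)
      fix i a assume ss: "synchronous_strategy E F"
      have "entry_conj (E i a) = F i a" using ss unfolding synchronous_strategy_def by simp
      then have "frob_norm (F i a * lam - lam * F i a) \<le> sqrt (2 / m) * sqrt eps" using SB1[of i a] sq by simp
      also have "\<dots> \<le> C * sqrt eps" unfolding C_def using K0 e0 by (intro mult_right_mono) auto
      finally show "frob_norm (F i a * lam - lam * F i a) \<le> C * eps powr (1/2)" unfolding p2 .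
    qed
  qed
qed

end
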